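(* Let $3/2<s<3$ and $M\ge0$. There exists $C_s>0$ such that for every integer $N\ge1$ and every mean-zero divergence-free field $u$ on $\mathbb T^3$ with $\|u\|_{H^s}\le M$, and every orbit $\alpha\in\mathcal O_N$ with representative $k_\alpha$, \[ \sum_{\beta\in\mathcal O_N}|M_{\alpha\beta}(u)|\le C_sM^3\bigl(|k_\alpha|^{2-s}+|k_\alpha|^{6-3s}\bigr). \] Consequently \[ \sup_{\alpha\in\mathcal O_N}\sum_{\beta\in\mathcal O_N}|M_{\alpha\beta}(u)|\le\begin{cases}C_sM^3,&2<s<3,\\ C_sM^3N^{6-3s},&3/2<s\le2.\end{cases} \]
   Context: $\mathbb T^3=[0,2\pi]^3$; $u(x)=\sum_{k\ne0}\hat u_ke^{ik\cdot x}$, $\hat u_k\in\mathbb C^3$, divergence-free meaning $k\cdot\hat u_k=0$, reality $\hat u_{-k}=\overline{\hat u_k}$, and $\|u\|_{H^s}^2:=\sum_{k\ne0}|k|^{2s}|\hat u_k|^2$ ($|\cdot|$ Euclidean). $\Lambda_N:=\{k\in\mathbb Z^3\setminus\{0\}:|k|_\infty\le N\}$; $O_h$ is the group of 48 signed coordinate permutations, $\mathcal O_N:=\Lambda_N/O_h$, $|\alpha|$ the orbit cardinality. $P(k):=I-\frac{k\otimes k}{|k|^2}$; for $a,b\in\mathbb C^3$, $a\cdot b:=\sum_ja_jb_j$. \[ M_{\alpha\beta}(u):=\frac{1}{|\alpha|}\sum_{k\in\alpha}\sum_{\substack{p\in\beta\\ q=k-p\in\Lambda_N}}|k|^2\,\mathrm{Re}\Bigl(\overline{\hat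 u_k}\cdot\bigl[-iP(k)\bigl(q(\hat u_p\cdot\hat u_q)\bigr)\bigr]\Bigr). \] *)

theory Defs
  imports "HOL-Analysis.Analysis"
begin

text \<open>Lattice points of Z^3 are vectors of type int^3; Fourier coefficients are
  vectors of type complex^3.  A velocity field u on T^3 is represented by its
  Fourier coefficient map k |-> u_k.\<close>

type_synonym lat = "int ^ 3"
type_synonym coeffs = "int ^ 3 \<Rightarrow> complex ^ 3"

definition rvec :: "lat \<Rightarrow> real ^ 3" where
  "rvec k = (\<chi> i. real_of_int (k $ i))"

definition cvec :: "lat \<Rightarrow> complex ^ 3" where
  "cvec k = (\<chi> i. complex_of_int (k $ i))"

definition knorm :: "lat \<Rightarrow> real" where
  "knorm k = norm (rvec k)"

definition bdot :: "complex ^ 3 \<Rightarrow> complex ^ 3 \<Rightarrow> complex" where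
  "bdot a b = (\<Sum>j\<in>UNIV. a $ j * b $ j)"

definition leray :: "lat \<Rightarrow> complex ^ 3 \<Rightarrow> complex ^ 3" where
  "leray k w = w - (bdot (cvec k) w / complex_of_real ((knorm k)\<^sup>2)) *s cvec k"

definition mean_zero_div_free_real :: "coeffs \<Rightarrow> bool" where
  "mean_zero_div_free_real u \<longleftrightarrow>
     u 0 = 0 \<and>
     (\<forall>k. bdot (cvec k) (u k) = 0) \<and>
     (\<forall>k. u (- k) = (\<chi> j. cnj (u k $ j)))"

definition Hs_term :: "real \<Rightarrow> coeffs \<Rightarrow> lat \<Rightarrow> real" where
  "Hs_term s u k = knorm k powr (2 * s) * (norm (u k))\<^sup>2"

definition in_Hs :: "real \<Rightarrow> coeffs \<Rightarrow> bool" where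
  "in_Hs s u \<longleftrightarrow> Hs_term s u summable_on (UNIV - {0})"

definition Hs_norm :: "real \<Rightarrow> coeffs \<Rightarrow> real" where
  "Hs_norm s u = sqrt (infsum (Hs_term s u) (UNIV - {0}))"

definition Lambda :: "nat \<Rightarrow> lat set" where
  "Lambda N = {k. k \<noteq> 0 \<and> (\<forall>i. \<bar>k $ i\<bar> \<le> int N)}"

definition Oh :: "(lat \<Rightarrow> lat) set" where
  "Oh = {g. \<exists>\<sigma> \<epsilon>. \<sigma> permutes (UNIV :: 3 set) \<and> (\<forall>i. \<epsilon> i \<in> {-1, 1 :: int}) \<and>
              g = (\<lambda>k. \<chi> i. \<epsilon> i * k $ \<sigma> i)}"

definition orbit :: "lat \<Rightarrow> lat set" where
  "orbit k = {g k | g. g \<in> Oh}"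

definition Orbits :: "nat \<Rightarrow> lat set set" where
  "Orbits N = orbit ` Lambda N"

definition Mab :: "nat \<Rightarrow> coeffs \<Rightarrow> lat set \<Rightarrow> lat set \<Rightarrow> real" where
  "Mab N u \<alpha> \<beta> = (1 / real (card \<alpha>)) *
     (\<Sum>k\<in>\<alpha>. \<Sum>p\<in>{p \<in> \<beta>. k - p \<in> Lambda N}.
        (knorm k)\<^sup>2 *
        Re (bdot (\<chi> j. cnj (u k $ j))
                 (- \<i> *s leray k (bdot (u p) (u (k - p)) *s cvec (k - p)))))"

end

theory Submission
  imports Defs
begin


lemma eps_sq: "e \<in> {-1, 1 :: int} \<Longrightarrow> e * e = 1" by auto

lemma id_Oh: "(\<lambda>k. k) \<in> Oh"
  unfolding Oh_def
  by (rule CollectI, rule exI[of _ id], rule exI[of _ "\<lambda>_. 1"]) (auto simp: permutes_id vec_eq_iff)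

lemma comp_Oh: assumes "g1 \<in> Oh" "g2 \<in> Oh" shows "(\<lambda>k. g1 (g2 k)) \<in> Oh"
proof -
  from assms obtain \<sigma>1 \<epsilon>1 \<sigma>2 \<epsilon>2 where a: "\<sigma>1 permutes (UNIV::3 set)" "\<forall>i. \<epsilon>1 i \<in> {-1, 1 :: int}"
     "g1 = (\<lambda>k. \<chi> i. \<epsilon>1 i * k $ \<sigma>1 i)" "\<sigma>2 permutes (UNIV::3 set)" "\<forall>i. \<epsilon>2 i \<in> {-1, 1 :: int}"
     "g2 = (\<lambda>k. \<chi> i. \<epsilon>2 i * k $ \<sigma>2 i)" unfolding Oh_def by blast
  have "(\<lambda>k. g1 (g2 k)) = (\<lambda>k. \<chi> i. (\<epsilon>1 i * \<epsilon>2 (\<sigma>1 i)) * k $ (\<sigma>2 \<circ> \<sigma>1) i)"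
    unfolding a(3) a(6) by (simp add: mult.assoc)
  moreover have "\<forall>i. \<epsilon>1 i * \<epsilon>2 (\<sigma>1 i) \<in> {-1, 1 :: int}"
  proof
    fix i
    have "\<epsilon>1 i \<in> {-1, 1}" "\<epsilon>2 (\<sigma>1 i) \<in> {-1, 1}" using a(2,5) by blast+
    then show "\<epsilon>1 i * \<epsilon>2 (\<sigma>1 i) \<in> {-1, 1 :: int}" by auto
  qed
  moreover have "\<sigma>2 \<circ> \<sigma>1 permutes UNIV" using a by (simp add: permutes_compose)
  ultimately show ?thesis unfolding Oh_def
    by (intro CollectI exI[of _ "\<sigma>2 \<circ> \<sigma>1"] exI[of _ "\<lambda>i. \<epsilon>1 i * \<epsilon>2 (\<sigma>1 i)"] conjI)
qed

lemma inv_Oh: assumes "g \<in> Oh" shows "\<exists>h\<in>Oh. \<forall>k. h (g k) = k"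
proof -
  from assms obtain \<sigma> \<epsilon> where a: "\<sigma> permutes (UNIV::3 set)" "\<forall>i. \<epsilon> i \<in> {-1, 1 :: int}"
     "g = (\<lambda>k. \<chi> i. \<epsilon> i * k $ \<sigma> i)" unfolding Oh_def by blast
  define h where "h = (\<lambda>k::lat. \<chi> i. \<epsilon> (inv \<sigma> i) * k $ inv \<sigma> i)"
  have "h \<in> Oh" unfolding Oh_def h_def using a permutes_inv[OF a(1)]
    by (intro CollectI exI[of _ "inv \<sigma>"] exI[of _ "\<lambda>i. \<epsilon> (inv \<sigma> i)"] conjI) auto
  moreover have "\<forall>k. h (g k) = k"
  proof
    fix k
    have e: "\<epsilon> j * \<epsilon> j = 1" for j using eps_sq a(2) by blast
    show "h (g k) = k" unfolding h_def a(3) using e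
      by (simp add: vec_eq_iff permutes_inverses(1)[OF a(1)] mult.assoc[symmetric])
  qed
  ultimately show ?thesis by blast
qed

lemma orbit_self: "k \<in> orbit k"
  unfolding orbit_def using id_Oh by force

lemma orbit_move: assumes "g \<in> Oh" shows "orbit (g b) = orbit b"
proof
  show "orbit (g b) \<subseteq> orbit b" unfolding orbit_def using comp_Oh[OF _ assms] by force
  obtain h where h: "h \<in> Oh" "\<forall>k. h (g k) = k" using inv_Oh[OF assms] by blast
  show "orbit b \<subseteq> orbit (g b)"
  proof
    fix x assume "x \<in> orbit b"
    then obtain f where f: "f \<in> Oh" "x = f b" unfolding orbit_def by blast
    then have "x = (\<lambda>k. f (h k)) (g b)" using h by simp
    then show "x \<in> orbit (g b)" unfolding orbit_def
      apply (intro CollectI exI[of _ "\<lambda>k. f (h k)"]) using comp_Oh[OF f(1) h(1)] by simp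
  qed
qed

lemma orbit_mem: "p \<in> orbit a \<Longrightarrow> orbit p = orbit a"
  unfolding orbit_def using orbit_move unfolding orbit_def by blast

lemma knorm_sq: "knorm k = sqrt (\<Sum>i\<in>UNIV. (real_of_int (k $ i))\<^sup>2)"
  by (simp add: knorm_def norm_vec_def L2_set_def rvec_def)

lemma knorm_Oh: assumes "g \<in> Oh" shows "knorm (g k) = knorm k"
proof -
  from assms obtain \<sigma> \<epsilon> where a: "\<sigma> permutes (UNIV::3 set)" "\<forall>i. \<epsilon> i \<in> {-1, 1 :: int}"
     "g = (\<lambda>k. \<chi> i. \<epsilon> i * k $ \<sigma> i)" unfolding Oh_def by blast
  have e: "(real_of_int (\<epsilon> j * x))\<^sup>2 = (real_of_int x)\<^sup>2" for j x
  proof -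
    have "\<epsilon> j * \<epsilon> j = 1" using eps_sq a(2) by blast
    then show ?thesis by (simp add: power2_eq_square algebra_simps flip: of_int_mult)
  qed
  have "(\<Sum>i\<in>UNIV. (real_of_int (g k $ i))\<^sup>2) = (\<Sum>i\<in>UNIV. (real_of_int (k $ \<sigma> i))\<^sup>2)"
    unfolding a(3) using e by simp
  also have "\<dots> = (\<Sum>i\<in>UNIV. (real_of_int (k $ i))\<^sup>2)"
    using sum.permute[OF a(1), of "\<lambda>i. (real_of_int (k $ i))\<^sup>2"] by (simp add: comp_def)
  finally show ?thesis by (simp add: knorm_sq)
qed

lemma knorm_orbit: "k \<in> orbit a \<Longrightarrow> knorm k = knorm a"
  unfolding orbit_def using knorm_Oh by blast

lemma knorm_zero[simp]: "knorm 0 = 0"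
proof -
  have "rvec 0 = 0" by (simp add: rvec_def vec_eq_iff)
  then show ?thesis by (simp add: knorm_def)
qed

lemma knorm_ge1: assumes "q \<noteq> (0::lat)" shows "1 \<le> knorm q"
proof -
  obtain i where "q $ i \<noteq> 0" using assms by (metis vec_eq_iff zero_index)
  then have "1 \<le> \<bar>rvec q $ i\<bar>" by (simp add: rvec_def)
  also have "\<dots> \<le> knorm q" unfolding knorm_def by (rule component_le_norm_cart)
  finally show ?thesis .
qed

lemma knorm_le: assumes "k \<in> Lambda N" shows "knorm k \<le> 3 * real N"
proof -
  have "knorm k \<le> (\<Sum>i\<in>UNIV. \<bar>rvec k $ i\<bar>)" unfolding knorm_def by (rule norm_le_l1_cart)
  also have "\<dots> \<le> (\<Sum>i\<in>(UNIV::3 set). real N)"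
    apply (rule sum_mono) using assms by (simp add: rvec_def Lambda_def) (metis of_int_le_iff of_int_abs of_int_of_nat_eq)
  finally show ?thesis by simp
qed

lemma finite_Lambda: "finite (Lambda N)"
proof -
  have "Lambda N \<subseteq> (\<lambda>(a,b,c). vector [a,b,c]) ` ({-int N..int N} \<times> {-int N..int N} \<times> {-int N..int N})"
  proof
    fix k assume k: "k \<in> Lambda N"
    have "k = vector [k$1, k$2, k$3]" by (simp add: vec_eq_iff forall_3)
    moreover have "\<forall>i. \<bar>k $ i\<bar> \<le> int N" using k by (simp add: Lambda_def)
    then have "\<bar>k $ 1\<bar> \<le> int N" "\<bar>k $ 2\<bar> \<le> int N" "\<bar>k $ 3\<bar> \<le> int N" by blast+
    ultimately show "k \<in> (\<lambda>(a,b,c). vector [a,b,c]) ` ({-int N..int N} \<times> {-int N..int N} \<times> {-int N..int N})"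
      by (intro image_eqI[where x="(k$1,k$2,k$3)"]) (use \<open>\<bar>k $ 1\<bar> \<le> int N\<close> \<open>\<bar>k $ 2\<bar> \<le> int N\<close> \<open>\<bar>k $ 3\<bar> \<le> int N\<close> in \<open>auto simp: abs_le_iff\<close>)
  qed
  moreover have "finite ((\<lambda>(a,b,c). vector [a,b,c] :: lat) ` ({-int N..int N} \<times> {-int N..int N} \<times> {-int N..int N}))"
    by (intro finite_imageI finite_SigmaI finite_atLeastAtMost_int)
  ultimately show ?thesis by (rule finite_subset)
qed

lemma finite_shift: "finite {p. k - p \<in> Lambda N}"
proof -
  have "{p. k - p \<in> Lambda N} = (\<lambda>q. k - q) ` Lambda N" by (force simp: image_iff)
  then show ?thesis using finite_Lambda by simp
qed



lemma bdot_bound: "cmod (bdot x y) \<le> norm x * norm y"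
proof -
  have "cmod (bdot x y) \<le> (\<Sum>j\<in>UNIV. cmod (x $ j) * cmod (y $ j))"
    unfolding bdot_def by (rule order_trans[OF norm_sum]) (simp add: norm_mult)
  also have "\<dots> = (\<chi> j. cmod (x $ j)) \<bullet> (\<chi> j. cmod (y $ j))"
    by (simp add: inner_vec_def)
  also have "\<dots> \<le> norm (\<chi> j. cmod (x $ j)) * norm (\<chi> j. cmod (y $ j))"
    by (rule norm_cauchy_schwarz)
  also have "\<dots> = norm x * norm y" by (simp add: norm_vec_def)
  finally show ?thesis .
qed

lemma bdot_scale: "bdot x (c *s y) = c * bdot x y"
  by (simp add: bdot_def sum_3 algebra_simps)

lemma bdot_diff: "bdot x (y - z) = bdot x y - bdot x z"
  by (simp add: bdot_def sum_3 algebra_simps)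

lemma bdot_cnj: "bdot (\<chi> j. cnj (a $ j)) (cvec k) = cnj (bdot (cvec k) a)"
  by (simp add: bdot_def sum_3 cvec_def mult.commute)

lemma norm_cnj_vec: "norm (\<chi> j. cnj (a $ j)) = norm (a :: complex^3)"
  by (simp add: norm_vec_def)

lemma norm_cvec: "norm (cvec q) = knorm q"
  by (simp add: norm_vec_def knorm_def cvec_def rvec_def)

lemma term_bound:
  assumes "bdot (cvec k) (u k) = 0"
  shows "\<bar>(knorm k)\<^sup>2 * Re (bdot (\<chi> j. cnj (u k $ j))
                 (- \<i> *s leray k (bdot (u p) (u (k - p)) *s cvec (k - p))))\<bar>
     \<le> (knorm k)\<^sup>2 * norm (u k) * (norm (u p) * (norm (u (k - p)) * knorm (k - p)))"
proof -
  let ?a = "\<chi> j. cnj (u k $ j)"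
  let ?c = "bdot (u p) (u (k - p))"
  have z: "bdot ?a (cvec k) = 0" using assms by (simp add: bdot_cnj)
  have "bdot ?a (- \<i> *s leray k (?c *s cvec (k - p))) = - \<i> * ?c * bdot ?a (cvec (k - p))"
    unfolding leray_def by (simp add: bdot_scale bdot_diff z)
  then have "cmod (bdot ?a (- \<i> *s leray k (?c *s cvec (k - p)))) = cmod ?c * cmod (bdot ?a (cvec (k - p)))"
    by (simp add: norm_mult)
  also have "\<dots> \<le> (norm (u p) * norm (u (k - p))) * (norm (u k) * knorm (k - p))"
    apply (rule mult_mono) using bdot_bound[of "u p" "u (k - p)"] bdot_bound[of ?a "cvec (k - p)"]
    by (auto simp: norm_cnj_vec norm_cvec)
  finally have "\<bar>Re (bdot ?a (- \<i> *s leray k (?c *s cvec (k - p))))\<bar> \<le> (norm (u p) * norm (u (k - p))) * (norm (u k) * knorm (k - p))"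
    using abs_Re_le_cmod order_trans by blast
  then have "(knorm k)\<^sup>2 * \<bar>Re (bdot ?a (- \<i> *s leray k (?c *s cvec (k - p))))\<bar> \<le> (knorm k)\<^sup>2 * ((norm (u p) * norm (u (k - p))) * (norm (u k) * knorm (k - p)))"
    by (rule mult_left_mono) simp
  then show ?thesis by (simp add: abs_mult mult_ac)
qed

lemma Hs_term_nonneg: "0 \<le> Hs_term s u k" by (simp add: Hs_term_def)

lemma sum_le_Hs:
  assumes "finite F" "0 \<notin> F" "in_Hs s u"
  shows "sum (Hs_term s u) F \<le> (Hs_norm s u)\<^sup>2"
proof -
  have "sum (Hs_term s u) F = infsum (Hs_term s u) F" using assms by simp
  also have "\<dots> \<le> infsum (Hs_term s u) (UNIV - {0})"
    apply (rule infsum_mono_neutral)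
    using assms by (auto simp: in_Hs_def Hs_term_nonneg)
  also have "\<dots> = (Hs_norm s u)\<^sup>2" unfolding Hs_norm_def
    by (simp add: infsum_nonneg Hs_term_nonneg)
  finally show ?thesis .
qed



lemma Hs_norm_nonneg: "0 \<le> Hs_norm s u"
  unfolding Hs_norm_def by (rule real_sqrt_ge_zero, rule infsum_nonneg, rule Hs_term_nonneg)

lemma Hs_sq_le: assumes "Hs_norm s u \<le> M" shows "(Hs_norm s u)\<^sup>2 \<le> M\<^sup>2"
  using assms Hs_norm_nonneg by (intro power_mono) auto

lemma single_bound:
  assumes md: "mean_zero_div_free_real u" and h: "in_Hs s u" "Hs_norm s u \<le> M"
  shows "(knorm k)\<^sup>2 * norm (u k) \<le> M * knorm k powr (2 - s)"
proof (cases "k = 0")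
  case True
  then show ?thesis using md by (simp add: mean_zero_div_free_real_def)
next
  case False
  have kp: "0 < knorm k" using knorm_ge1[OF False] by simp
  have M0: "0 \<le> M" using h(2) Hs_norm_nonneg[of s u] by linarith
  have "Hs_term s u k \<le> M\<^sup>2"
    using sum_le_Hs[of "{k}" s u] False h Hs_sq_le[OF h(2)] by simp
  have e1: "(knorm k powr s)\<^sup>2 = knorm k powr (2 * s)"
    by (simp only: power2_eq_square powr_add[symmetric] mult_2)
  have "(knorm k powr s * norm (u k))\<^sup>2 = Hs_term s u k"
    unfolding Hs_term_def by (simp only: power_mult_distrib e1)
  then have "(knorm k powr s * norm (u k))\<^sup>2 \<le> M\<^sup>2" using \<open>Hs_term s u k \<le> M\<^sup>2\<close> by simp
  then have a: "knorm k powr s * norm (u k) \<le> M" using M0 by (rule power2_le_imp_le)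
  have "knorm k powr (2 - s) * knorm k powr s = knorm k powr 2"
    by (simp only: powr_add[symmetric]) simp
  then have "(knorm k)\<^sup>2 * norm (u k) = knorm k powr (2 - s) * (knorm k powr s * norm (u k))"
    using kp by (simp add: mult.assoc[symmetric])
  also have "\<dots> \<le> knorm k powr (2 - s) * M" using a by (simp add: mult_left_mono)
  finally show ?thesis by (simp add: mult.commute)
qed

lemma inner_sum_bound:
  assumes md: "mean_zero_div_free_real u" and h: "in_Hs s u" "Hs_norm s u \<le> M" and s1: "1 \<le> s"
    and G: "finite G" "G \<subseteq> {p. k - p \<in> Lambda N}"
  shows "(\<Sum>p\<in>G. norm (u p) * (norm (u (k - p)) * knorm (k - p))) \<le> M\<^sup>2"
proof -
  have u0: "u 0 = 0" using md by (simp add: mean_zero_div_free_real_def)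
  have H0: "Hs_term s u 0 = 0" by (simp add: Hs_term_def u0)
  have "(\<Sum>p\<in>G. (norm (u p))\<^sup>2) \<le> (\<Sum>p\<in>G. Hs_term s u p)"
  proof (rule sum_mono)
    fix p assume "p \<in> G"
    show "(norm (u p))\<^sup>2 \<le> Hs_term s u p"
    proof (cases "p = 0")
      case True then show ?thesis by (simp add: u0 H0)
    next
      case False
      have "1 \<le> knorm p powr (2 * s)" using knorm_ge1[OF False] s1 by (intro ge_one_powr_ge_zero) auto
      from mult_right_mono[OF this, of "(norm (u p))\<^sup>2"] show ?thesis unfolding Hs_term_def by simp
    qed
  qed
  also have "\<dots> = (\<Sum>p\<in>G - {0}. Hs_term s u p)" 
  proof (cases "0 \<in> G")
    case True
    show ?thesis using sum.remove[OF G(1) True, of "Hs_term s u"] H0 by simp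
  qed simp
  also have "\<dots> \<le> M\<^sup>2" using sum_le_Hs[of "G - {0}" s u] G h Hs_sq_le[OF h(2)] by simp
  finally have A: "(\<Sum>p\<in>G. (norm (u p))\<^sup>2) \<le> M\<^sup>2" .
  have "(\<Sum>p\<in>G. (norm (u (k - p)) * knorm (k - p))\<^sup>2) \<le> (\<Sum>p\<in>G. Hs_term s u (k - p))"
  proof (rule sum_mono)
    fix p assume "p \<in> G"
    then have q: "k - p \<noteq> 0" using G by (auto simp: Lambda_def)
    have q1: "1 \<le> knorm (k - p)" using knorm_ge1[OF q] .
    have "(knorm (k - p))\<^sup>2 = knorm (k - p) powr 2" using q1 by simp
    also have "\<dots> \<le> knorm (k - p) powr (2 * s)" using q1 s1 by (intro powr_mono) auto
    finally have "(knorm (k - p))\<^sup>2 \<le> knorm (k - p) powr (2 * s)" .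
    then show "(norm (u (k - p)) * knorm (k - p))\<^sup>2 \<le> Hs_term s u (k - p)"
      unfolding Hs_term_def power_mult_distrib
      by (subst mult.commute, rule mult_right_mono) simp_all
  qed
  also have "\<dots> = sum (Hs_term s u) ((\<lambda>p. k - p) ` G)"
    by (subst sum.reindex) (simp_all add: inj_on_def comp_def)
  also have "\<dots> \<le> M\<^sup>2"
  proof -
    have "0 \<notin> (\<lambda>p. k - p) ` G" using G by (auto simp: Lambda_def)
    then show ?thesis using sum_le_Hs[of "(\<lambda>p. k - p) ` G" s u] G(1) h Hs_sq_le[OF h(2)] by simp
  qed
  finally have B: "(\<Sum>p\<in>G. (norm (u (k - p)) * knorm (k - p))\<^sup>2) \<le> M\<^sup>2" .
  have "(\<Sum>p\<in>G. norm (u p) * (norm (u (k - p)) * knorm (k - p)))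
      \<le> (\<Sum>p\<in>G. ((norm (u p))\<^sup>2 + (norm (u (k - p)) * knorm (k - p))\<^sup>2) / 2)"
  proof (rule sum_mono)
    fix p
    show "norm (u p) * (norm (u (k - p)) * knorm (k - p)) \<le> ((norm (u p))\<^sup>2 + (norm (u (k - p)) * knorm (k - p))\<^sup>2) / 2"
      using sum_squares_bound[of "norm (u p)" "norm (u (k - p)) * knorm (k - p)"] by (simp add: mult.assoc)
  qed
  also have "\<dots> = ((\<Sum>p\<in>G. (norm (u p))\<^sup>2) + (\<Sum>p\<in>G. (norm (u (k - p)) * knorm (k - p))\<^sup>2)) / 2"
    by (simp only: sum.distrib flip: sum_divide_distrib)
  also have "\<dots> \<le> M\<^sup>2" using A B by simp
  finally show ?thesis .
qed



lemma alpha_bound: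
  assumes md: "mean_zero_div_free_real u" and h: "in_Hs s u" "Hs_norm s u \<le> M" and s1: "1 \<le> s"
    and al: "\<alpha> \<in> Orbits N" and ka: "k\<^sub>\<alpha> \<in> \<alpha>"
  shows "(\<Sum>\<beta>\<in>Orbits N. \<bar>Mab N u \<alpha> \<beta>\<bar>) \<le> M ^ 3 * knorm k\<^sub>\<alpha> powr (2 - s)"
proof -
  define T where "T k p = (knorm k)\<^sup>2 *
        Re (bdot (\<chi> j. cnj (u k $ j))
                 (- \<i> *s leray k (bdot (u p) (u (k - p)) *s cvec (k - p))))" for k p
  define A where "A \<beta> k = {p \<in> \<beta>. k - p \<in> Lambda N}" for \<beta> :: "lat set" and k
  define B where "B = M ^ 3 * knorm k\<^sub>\<alpha> powr (2 - s)"
  have M0: "0 \<le> M" using h(2) Hs_norm_nonneg[of s u] by linarith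
  have B0: "0 \<le> B" unfolding B_def using M0 by simp
  obtain k0 where k0: "k0 \<in> Lambda N" "\<alpha> = orbit k0" using al by (auto simp: Orbits_def)
  have fin: "finite (Orbits N)" by (simp add: Orbits_def finite_Lambda)
  have "\<bar>Mab N u \<alpha> \<beta>\<bar> \<le> (1 / real (card \<alpha>)) * (\<Sum>k\<in>\<alpha>. \<Sum>p\<in>A \<beta> k. \<bar>T k p\<bar>)" for \<beta>
  proof -
    have "\<bar>Mab N u \<alpha> \<beta>\<bar> = (1 / real (card \<alpha>)) * \<bar>\<Sum>k\<in>\<alpha>. \<Sum>p\<in>A \<beta> k. T k p\<bar>"
      unfolding Mab_def T_def A_def by (simp add: abs_mult)
    also have "\<dots> \<le> (1 / real (card \<alpha>)) * (\<Sum>k\<in>\<alpha>. \<Sum>p\<in>A \<beta> k. \<bar>T k p\<bar>)"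
      apply (rule mult_left_mono)
       apply (rule order_trans[OF sum_abs])
       apply (rule sum_mono)
       apply (rule sum_abs)
      by simp
    finally show ?thesis .
  qed
  then have "(\<Sum>\<beta>\<in>Orbits N. \<bar>Mab N u \<alpha> \<beta>\<bar>) \<le> (\<Sum>\<beta>\<in>Orbits N. (1 / real (card \<alpha>)) * (\<Sum>k\<in>\<alpha>. \<Sum>p\<in>A \<beta> k. \<bar>T k p\<bar>))"
    by (rule sum_mono)
  also have "\<dots> = (1 / real (card \<alpha>)) * (\<Sum>k\<in>\<alpha>. \<Sum>\<beta>\<in>Orbits N. \<Sum>p\<in>A \<beta> k. \<bar>T k p\<bar>)"
    unfolding sum_distrib_left by (rule sum.swap)
  also have "\<dots> \<le> (1 / real (card \<alpha>)) * (\<Sum>k\<in>\<alpha>. B)"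
  proof (rule mult_left_mono[OF sum_mono])
    fix k assume k: "k \<in> \<alpha>"
    have fA: "finite (A \<beta> k)" for \<beta> unfolding A_def
      by (rule finite_subset[OF _ finite_shift[of k N]]) auto
    have disj: "\<forall>\<beta>1\<in>Orbits N. \<forall>\<beta>2\<in>Orbits N. \<beta>1 \<noteq> \<beta>2 \<longrightarrow> A \<beta>1 k \<inter> A \<beta>2 k = {}"
      unfolding A_def Orbits_def using orbit_mem by blast
    have "(\<Sum>\<beta>\<in>Orbits N. \<Sum>p\<in>A \<beta> k. \<bar>T k p\<bar>) = (\<Sum>p\<in>\<Union>(((\<lambda>\<beta>. A \<beta> k)) ` Orbits N). \<bar>T k p\<bar>)"
      by (rule sum.UNION_disjoint[symmetric]) (use fin fA disj in auto)
    also have "\<dots> \<le> (\<Sum>p\<in>\<Union>(((\<lambda>\<beta>. A \<beta> k)) ` Orbits N). (knorm k)\<^sup>2 * norm (u k) * (norm (u p) * (norm (u (k - p)) * knorm (k - p))))"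
      apply (rule sum_mono) unfolding T_def using md
      by (intro term_bound) (simp add: mean_zero_div_free_real_def)
    also have "\<dots> = (knorm k)\<^sup>2 * norm (u k) * (\<Sum>p\<in>\<Union>(((\<lambda>\<beta>. A \<beta> k)) ` Orbits N). norm (u p) * (norm (u (k - p)) * knorm (k - p)))"
      by (simp add: sum_distrib_left)
    also have "\<dots> \<le> (knorm k)\<^sup>2 * norm (u k) * M\<^sup>2"
      apply (rule mult_left_mono)
       apply (rule inner_sum_bound[OF md h s1])
      using fin fA by (auto simp: A_def)
    also have "\<dots> \<le> M * knorm k powr (2 - s) * M\<^sup>2"
      by (rule mult_right_mono[OF single_bound[OF md h]]) simp
    also have "\<dots> = B" unfolding B_def
      using knorm_orbit[of k k0] knorm_orbit[of k\<^sub>\<alpha> k0] k ka k0 by (simp add: power3_eq_cube power2_eq_square)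
    finally show "(\<Sum>\<beta>\<in>Orbits N. \<Sum>p\<in>A \<beta> k. \<bar>T k p\<bar>) \<le> B" .
  qed simp
  also have "\<dots> \<le> B" using B0 by (cases "card \<alpha> = 0") auto
  finally show ?thesis unfolding B_def .
qed


theorem theorem6p4:
  fixes s M :: real
  assumes "3 / 2 < s" and "s < 3" and "0 \<le> M"
  shows "(\<exists>C > 0. \<forall>N::nat. N \<ge> 1 \<longrightarrow>
            (\<forall>u. mean_zero_div_free_real u \<and> in_Hs s u \<and> Hs_norm s u \<le> M \<longrightarrow>
              (\<forall>\<alpha>\<in>Orbits N. \<forall>k\<^sub>\<alpha>\<in>\<alpha>.
                 (\<Sum>\<beta>\<in>Orbits N. \<bar>Mab N u \<alpha> \<beta>\<bar>)
                   \<le> C * M ^ 3 * (knorm k\<^sub>\<alpha> powr (2 - s) + knorm k\<^sub>\<alpha> powr (6 - 3 * s)))))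
       \<and> (\<exists>C > 0. \<forall>N::nat. N \<ge> 1 \<longrightarrow>
            (\<forall>u. mean_zero_div_free_real u \<and> in_Hs s u \<and> Hs_norm s u \<le> M \<longrightarrow>
              (SUP \<alpha>\<in>Orbits N. \<Sum>\<beta>\<in>Orbits N. \<bar>Mab N u \<alpha> \<beta>\<bar>)
                \<le> (if 2 < s then C * M ^ 3 else C * M ^ 3 * real N powr (6 - 3 * s))))"
  proof -
  have s1: "1 \<le> s" using assms by simp
  show ?thesis
  proof (intro conjI)
    show "\<exists>C > 0. \<forall>N::nat. N \<ge> 1 \<longrightarrow>
            (\<forall>u. mean_zero_div_free_real u \<and> in_Hs s u \<and> Hs_norm s u \<le> M \<longrightarrow>
              (\<forall>\<alpha>\<in>Orbits N. \<forall>k\<^sub>\<alpha>\<in>\<alpha>.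
                 (\<Sum>\<beta>\<in>Orbits N. \<bar>Mab N u \<alpha> \<beta>\<bar>)
                   \<le> C * M ^ 3 * (knorm k\<^sub>\<alpha> powr (2 - s) + knorm k\<^sub>\<alpha> powr (6 - 3 * s))))"
    proof (intro exI[of _ 1] conjI allI impI ballI)
      fix N :: nat and u \<alpha> k\<^sub>\<alpha>
      assume u: "mean_zero_div_free_real u \<and> in_Hs s u \<and> Hs_norm s u \<le> M" and al: "\<alpha> \<in> Orbits N" "k\<^sub>\<alpha> \<in> \<alpha>"
      have "(\<Sum>\<beta>\<in>Orbits N. \<bar>Mab N u \<alpha> \<beta>\<bar>) \<le> M ^ 3 * knorm k\<^sub>\<alpha> powr (2 - s)"
        using alpha_bound[OF _ _ _ s1 al] u by blast
      also have "\<dots> \<le> 1 * M ^ 3 * (knorm k\<^sub>\<alpha> powr (2 - s) + knorm k\<^sub>\<alpha> powr (6 - 3 * s))"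
        using assms(3) by (simp add: mult_left_mono)
      finally show "(\<Sum>\<beta>\<in>Orbits N. \<bar>Mab N u \<alpha> \<beta>\<bar>) \<le> 1 * M ^ 3 * (knorm k\<^sub>\<alpha> powr (2 - s) + knorm k\<^sub>\<alpha> powr (6 - 3 * s))" .
    qed simp
  next
    show "\<exists>C > 0. \<forall>N::nat. N \<ge> 1 \<longrightarrow>
            (\<forall>u. mean_zero_div_free_real u \<and> in_Hs s u \<and> Hs_norm s u \<le> M \<longrightarrow>
              (SUP \<alpha>\<in>Orbits N. \<Sum>\<beta>\<in>Orbits N. \<bar>Mab N u \<alpha> \<beta>\<bar>)
                \<le> (if 2 < s then C * M ^ 3 else C * M ^ 3 * real N powr (6 - 3 * s)))"
    proof (intro exI[of _ 3] conjI allI impI)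
      fix N :: nat and u
      assume N: "N \<ge> 1" and u: "mean_zero_div_free_real u \<and> in_Hs s u \<and> Hs_norm s u \<le> M"
      have ne: "Orbits N \<noteq> {}"
      proof -
        have "(\<chi> i. 1) \<in> Lambda N" using N by (auto simp: Lambda_def vec_eq_iff)
        then show ?thesis by (auto simp: Orbits_def)
      qed
      show "(SUP \<alpha>\<in>Orbits N. \<Sum>\<beta>\<in>Orbits N. \<bar>Mab N u \<alpha> \<beta>\<bar>)
                \<le> (if 2 < s then 3 * M ^ 3 else 3 * M ^ 3 * real N powr (6 - 3 * s))"
      proof (rule cSUP_least[OF ne])
        fix \<alpha> assume al: "\<alpha> \<in> Orbits N"
        obtain k0 where k0: "k0 \<in> Lambda N" "\<alpha> = orbit k0" using al by (auto simp: Orbits_def)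
        have kin: "k0 \<in> \<alpha>" using k0 orbit_self by simp
        have b: "(\<Sum>\<beta>\<in>Orbits N. \<bar>Mab N u \<alpha> \<beta>\<bar>) \<le> M ^ 3 * knorm k0 powr (2 - s)"
          using alpha_bound[OF _ _ _ s1 al kin] u by blast
        have k1: "1 \<le> knorm k0" using k0 knorm_ge1 by (auto simp: Lambda_def)
        have k3: "knorm k0 \<le> 3 * real N" using knorm_le[OF k0(1)] .
        have M3: "0 \<le> M ^ 3" using assms(3) by simp
        have "knorm k0 powr (2 - s) \<le> (if 2 < s then 3 else 3 * real N powr (6 - 3 * s))"
        proof (cases "2 < s")
          case True
          have "knorm k0 powr (2 - s) \<le> knorm k0 powr 0" using k1 True by (intro powr_mono) auto
          then show ?thesis using True k1 by simp
        next
          case False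
          have "knorm k0 powr (2 - s) \<le> (3 * real N) powr (2 - s)"
            using False k1 k3 by (intro powr_mono2) auto
          also have "\<dots> = 3 powr (2 - s) * real N powr (2 - s)" by (simp add: powr_mult)
          also have "\<dots> \<le> 3 powr 1 * real N powr (6 - 3 * s)"
          proof (rule mult_mono)
            show "3 powr (2 - s) \<le> (3::real) powr 1" using assms by (intro powr_mono) auto
            show "real N powr (2 - s) \<le> real N powr (6 - 3 * s)" using False N by (intro powr_mono) auto
          qed simp_all
          finally show ?thesis using False by simp
        qed
        then have "M ^ 3 * knorm k0 powr (2 - s) \<le> M ^ 3 * (if 2 < s then 3 else 3 * real N powr (6 - 3 * s))"
          using M3 by (rule mult_left_mono)
        then show "(\<Sum>\<beta>\<in>Orbits N. \<bar>Mab N u \<alpha> \<beta>\<bar>) \<le> (if 2 < s then 3 * M ^ 3 else 3 * M ^ 3 * real N powr (6 - 3 * s))"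
          using b by (auto simp: algebra_simps split: if_splits)
      qed
    qed simp
  qed
qed


end
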